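(* A binary PS-algebra $\langle A,f,g\rangle$ satisfies (wMIA): for all $x,y\in A$, if $x\neq0$ and $y\neq0$ then $g(x,y)\leq f(x,y)$, if and only if $S_g\subseteq Q_f$. In particular, for every betweenness frame $\mathfrak F=\langle U,B\rangle$, the full complex algebra $\langle 2^U,\langle B\rangle,[\![B]\!]\rangle$ satisfies $S_{[\![B]\!]}\subseteq Q_{\langle B\rangle}$.
   Context: A PS-algebra is $\langle A,f,g\rangle$ where $A$ is a Boolean algebra with at least two elements and $f,g\colon A^2\to A$ satisfy: $f(x,y)=0$ whenever $x=0$ or $y=0$; $f$ additive in each argument; $g(x,y)=1$ whenever $x=0$ or $y=0$; $g$ co-additive in each argument ($g(x+x',y)=g(x,y)\cdot g(x',y)$, $g(x,y+y')=g(x,y)\cdot g(x,y')$). On the set $\mathrm{Ult}(A)$ of ultrafilters define ternary relations $Q_f(\mathcal U_1,\mathcal U_2,\mathcal U_3)\iff f[\mathcal U_1\times\mathcal U_3]\subseteq\mathcal U_2$ and $S_g(\mathcal U_1,\mathcal U_2,\mathcal U_3)\iff g[\mathcal U_1\times\mathcal U_3]\cap\mathcal U_2\neq\emptyset$. A betweenness frame is $\langle U,B\rangle$, $U\neq\emptyset$, $B\subseteq U^3$, with, for all $a,b,c$: $B(a,a,a)$; $B(a,b,c)\Rightarrow B(c,b,a)$; $B(a,b,c)\Rightarrow B(a,a,b)$; $B(a,b,c)\wedge B(a,c,b)\Rightarrow b=c$. Its complex operators on $2^U$ are $\langle B\rangle(X,Y)=\{u\mid\exists x\in X\,\exists y\in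 Y\,B(x,u,y)\}$ and $[\![B]\!](X,Y)=\{u\mid\forall x\in X\,\forall y\in Y\,B(x,u,y)\}$. *)

theory Defs
  imports Main
begin

text \<open>Boolean algebras are taken as the type class boolean_algebra; 0 = bot, 1 = top,
  + = sup, \<cdot> = inf, order = the lattice order.\<close>

definition PS_algebra :: "('a::boolean_algebra \<Rightarrow> 'a \<Rightarrow> 'a) \<Rightarrow> ('a \<Rightarrow> 'a \<Rightarrow> 'a) \<Rightarrow> bool" where
  "PS_algebra f g \<longleftrightarrow>
     (bot::'a) \<noteq> top \<and>
     (\<forall>x y. (x = bot \<or> y = bot) \<longrightarrow> f x y = bot) \<and>
     (\<forall>x x' y. f (sup x x') y = sup (f x y) (f x' y)) \<and>
     (\<forall>x y y'. f x (sup y y') = sup (f x y) (f x y')) \<and>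
     (\<forall>x y. (x = bot \<or> y = bot) \<longrightarrow> g x y = top) \<and>
     (\<forall>x x' y. g (sup x x') y = inf (g x y) (g x' y)) \<and>
     (\<forall>x y y'. g x (sup y y') = inf (g x y) (g x y'))"

definition ultrafilter :: "'a::boolean_algebra set \<Rightarrow> bool" where
  "ultrafilter F \<longleftrightarrow>
     top \<in> F \<and> bot \<notin> F \<and>
     (\<forall>x y. x \<in> F \<and> x \<le> y \<longrightarrow> y \<in> F) \<and>
     (\<forall>x y. x \<in> F \<and> y \<in> F \<longrightarrow> inf x y \<in> F) \<and>
     (\<forall>x. x \<in> F \<or> - x \<in> F)"

definition Ult :: "'a::boolean_algebra set set" where
  "Ult = {F. ultrafilter F}"

definition Q_rel :: "('a::boolean_algebra \<Rightarrow> 'a \<Rightarrow> 'a) \<Rightarrow> 'a set \<Rightarrow> 'a set \<Rightarrow> 'a set \<Rightarrow> bool" where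
  "Q_rel f U1 U2 U3 \<longleftrightarrow> {f x y | x y. x \<in> U1 \<and> y \<in> U3} \<subseteq> U2"

definition S_rel :: "('a::boolean_algebra \<Rightarrow> 'a \<Rightarrow> 'a) \<Rightarrow> 'a set \<Rightarrow> 'a set \<Rightarrow> 'a set \<Rightarrow> bool" where
  "S_rel g U1 U2 U3 \<longleftrightarrow> {g x y | x y. x \<in> U1 \<and> y \<in> U3} \<inter> U2 \<noteq> {}"

definition S_sub_Q :: "('a::boolean_algebra \<Rightarrow> 'a \<Rightarrow> 'a) \<Rightarrow> ('a \<Rightarrow> 'a \<Rightarrow> 'a) \<Rightarrow> bool" where
  "S_sub_Q g f \<longleftrightarrow> (\<forall>U1\<in>Ult. \<forall>U2\<in>Ult. \<forall>U3\<in>Ult. S_rel g U1 U2 U3 \<longrightarrow> Q_rel f U1 U2 U3)"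

definition wMIA :: "('a::boolean_algebra \<Rightarrow> 'a \<Rightarrow> 'a) \<Rightarrow> ('a \<Rightarrow> 'a \<Rightarrow> 'a) \<Rightarrow> bool" where
  "wMIA f g \<longleftrightarrow> (\<forall>x y. x \<noteq> bot \<and> y \<noteq> bot \<longrightarrow> g x y \<le> f x y)"

definition betweenness_frame :: "'u set \<Rightarrow> ('u \<Rightarrow> 'u \<Rightarrow> 'u \<Rightarrow> bool) \<Rightarrow> bool" where
  "betweenness_frame U B \<longleftrightarrow> U \<noteq> {} \<and>
     (\<forall>a b c. B a b c \<longrightarrow> a \<in> U \<and> b \<in> U \<and> c \<in> U) \<and>
     (\<forall>a\<in>U. B a a a) \<and>
     (\<forall>a\<in>U. \<forall>b\<in>U. \<forall>c\<in>U. B a b c \<longrightarrow> B c b a) \<and>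
     (\<forall>a\<in>U. \<forall>b\<in>U. \<forall>c\<in>U. B a b c \<longrightarrow> B a a b) \<and>
     (\<forall>a\<in>U. \<forall>b\<in>U. \<forall>c\<in>U. B a b c \<and> B a c b \<longrightarrow> b = c)"

definition diamB :: "('u \<Rightarrow> 'u \<Rightarrow> 'u \<Rightarrow> bool) \<Rightarrow> 'u set \<Rightarrow> 'u set \<Rightarrow> 'u set" where
  "diamB B X Y = {u. \<exists>x\<in>X. \<exists>y\<in>Y. B x u y}"

definition boxB :: "('u \<Rightarrow> 'u \<Rightarrow> 'u \<Rightarrow> bool) \<Rightarrow> 'u set \<Rightarrow> 'u set \<Rightarrow> 'u set" where
  "boxB B X Y = {u. \<forall>x\<in>X. \<forall>y\<in>Y. B x u y}"

end

theory Submission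
  imports Defs
begin

definition pfilt :: "'a::boolean_algebra set \<Rightarrow> bool" where
  "pfilt F \<longleftrightarrow> bot \<notin> F \<and> (\<forall>x y. x \<in> F \<and> x \<le> y \<longrightarrow> y \<in> F) \<and> (\<forall>x y. x \<in> F \<and> y \<in> F \<longrightarrow> inf x y \<in> F)"

lemma gen_pfilt:
  fixes M :: "'a::boolean_algebra set"
  assumes "pfilt M" "\<forall>m\<in>M. inf m x \<noteq> bot"
  shows "pfilt {z. \<exists>m\<in>M. inf m x \<le> z}"
  unfolding pfilt_def
proof (intro conjI allI impI)
  show "bot \<notin> {z. \<exists>m\<in>M. inf m x \<le> z}" using assms(2) bot_unique by auto
next
  fix a b assume "a \<in> {z. \<exists>m\<in>M. inf m x \<le> z} \<and> a \<le> b"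
  then obtain m where "m \<in> M" "inf m x \<le> a" "a \<le> b" by blast
  then show "b \<in> {z. \<exists>m\<in>M. inf m x \<le> z}" by (blast intro: order_trans)
next
  fix a b assume "a \<in> {z. \<exists>m\<in>M. inf m x \<le> z} \<and> b \<in> {z. \<exists>m\<in>M. inf m x \<le> z}"
  then obtain m1 m2 where m: "m1 \<in> M" "m2 \<in> M" "inf m1 x \<le> a" "inf m2 x \<le> b" by auto
  have "inf m1 m2 \<in> M" using m assms(1) unfolding pfilt_def by blast
  moreover have "inf (inf m1 m2) x \<le> inf a b"
  proof (rule le_infI)
    have "inf (inf m1 m2) x \<le> inf m1 x" by (rule inf_mono) simp_all
    then show "inf (inf m1 m2) x \<le> a" using m(3) by (rule order_trans)
    have "inf (inf m1 m2) x \<le> inf m2 x" by (rule inf_mono) simp_all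
    then show "inf (inf m1 m2) x \<le> b" using m(4) by (rule order_trans)
  qed
  ultimately show "inf a b \<in> {z. \<exists>m\<in>M. inf m x \<le> z}" by blast
qed

lemma pfiltD:
  assumes "pfilt F"
  shows "bot \<notin> F" "\<And>x y. x \<in> F \<Longrightarrow> x \<le> y \<Longrightarrow> y \<in> F" "\<And>x y. x \<in> F \<Longrightarrow> y \<in> F \<Longrightarrow> inf x y \<in> F"
  using assms unfolding pfilt_def by blast+

lemma ultrafilter_exists:
  fixes a :: "'a::boolean_algebra"
  assumes "a \<noteq> bot"
  shows "\<exists>F. ultrafilter F \<and> a \<in> F"
proof -
  define A where "A = {F::'a set. pfilt F \<and> a \<in> F}"
  have "pfilt {y. a \<le> y}" unfolding pfilt_def
  proof (intro conjI allI impI)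
    show "bot \<notin> {y. a \<le> y}" using assms bot_unique by auto
  next
    fix x y assume "x \<in> {y. a \<le> y} \<and> x \<le> y" then show "y \<in> {y. a \<le> y}" by auto
  next
    fix x y assume "x \<in> {y. a \<le> y} \<and> y \<in> {y. a \<le> y}" then show "inf x y \<in> {y. a \<le> y}" by auto
  qed
  then have A0: "{y. a \<le> y} \<in> A" unfolding A_def by auto
  have "\<exists>M\<in>A. \<forall>X\<in>A. M \<subseteq> X \<longrightarrow> X = M"
  proof (rule subset_Zorn_nonempty)
    show "A \<noteq> {}" using A0 by auto
  next
    fix C assume C: "C \<noteq> {}" "subset.chain A C"
    have CA: "C \<subseteq> A" and ch: "\<And>X Y. X \<in> C \<Longrightarrow> Y \<in> C \<Longrightarrow> X \<subseteq> Y \<or> Y \<subseteq> X"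
      using C(2) unfolding subset.chain_def by auto
    have pC: "\<And>X. X \<in> C \<Longrightarrow> pfilt X" and aC: "\<And>X. X \<in> C \<Longrightarrow> a \<in> X" using CA unfolding A_def by auto
    have "pfilt (\<Union>C)" unfolding pfilt_def
    proof (intro conjI allI impI)
      show "bot \<notin> \<Union>C" using pC pfiltD(1) by blast
      fix x y
      { assume "x \<in> \<Union>C \<and> x \<le> y"
        then obtain X where "X \<in> C" "x \<in> X" "x \<le> y" by blast
        then have "y \<in> X" using pC pfiltD(2) by blast
        then show "y \<in> \<Union>C" using \<open>X \<in> C\<close> by blast }
      { assume "x \<in> \<Union>C \<and> y \<in> \<Union>C"
        then obtain X Y where XY: "X \<in> C" "Y \<in> C" "x \<in> X" "y \<in> Y" by auto
        show "inf x y \<in> \<Union>C"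
        proof (cases "X \<subseteq> Y")
          case True
          then have "inf x y \<in> Y" using XY pC[of Y] pfiltD(3) by blast
          then show ?thesis using XY by blast
        next
          case False
          then have "Y \<subseteq> X" using ch XY by blast
          then have "inf x y \<in> X" using XY pC[of X] pfiltD(3) by blast
          then show ?thesis using XY by blast
        qed }
    qed
    moreover have "a \<in> \<Union>C" using aC C(1) by blast
    ultimately show "\<Union>C \<in> A" unfolding A_def by blast
  qed
  then obtain M where M: "M \<in> A" and max: "\<And>X. X \<in> A \<Longrightarrow> M \<subseteq> X \<Longrightarrow> X = M" by blast
  have pM: "pfilt M" and aM: "a \<in> M" using M unfolding A_def by auto
  have topM: "top \<in> M" using pfiltD(2)[OF pM aM] by simp
  have "\<forall>x. x \<in> M \<or> - x \<in> M"
  proof (rule allI, rule ccontr)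
    fix x assume nx: "\<not> (x \<in> M \<or> - x \<in> M)"
    have ext: False if "\<forall>m\<in>M. inf m z \<noteq> bot" "z \<notin> M" for z
    proof -
      let ?N = "{w. \<exists>m\<in>M. inf m z \<le> w}"
      have "pfilt ?N" using gen_pfilt[OF pM that(1)] .
      moreover have "M \<subseteq> ?N"
      proof
        fix m assume "m \<in> M"
        moreover have "inf m z \<le> m" by simp
        ultimately show "m \<in> ?N" by blast
      qed
      moreover have "z \<in> ?N" using topM by auto
      ultimately have "?N \<in> A" "M \<subseteq> ?N" using aM unfolding A_def by auto
      then have "?N = M" using max by blast
      then show False using \<open>z \<in> ?N\<close> that(2) by simp
    qed
    obtain m1 where m1: "m1 \<in> M" "inf m1 x = bot" using ext[of x] nx by blast
    obtain m2 where m2: "m2 \<in> M" "inf m2 (- x) = bot" using ext[of "- x"] nx by blast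
    have "inf m1 m2 \<in> M" using m1 m2 pfiltD(3)[OF pM] by blast
    moreover have "inf m1 m2 = bot"
    proof -
      have "m1 \<le> - x" using inf_shunt[of m1 x] m1(2) by simp
      moreover have "m2 \<le> x" using inf_shunt[of m2 "- x"] m2(2) by simp
      ultimately have "inf m1 m2 \<le> inf (- x) x" by (rule inf_mono)
      then show ?thesis by (simp add: bot_unique)
    qed
    ultimately show False using pfiltD(1)[OF pM] by auto
  qed
  then have "ultrafilter M" using pM topM unfolding ultrafilter_def pfilt_def by blast
  then show ?thesis using aM by blast
qed

lemma f_mono:
  assumes "PS_algebra f g" "x \<le> x'" "y \<le> y'"
  shows "f x y \<le> f x' y'"
proof -
  have A1: "\<forall>x x' y. f (sup x x') y = sup (f x y) (f x' y)"
    using assms(1) unfolding PS_algebra_def by (elim conjE) assumption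
  have A2: "\<forall>x y y'. f x (sup y y') = sup (f x y) (f x y')"
    using assms(1) unfolding PS_algebra_def by (elim conjE) assumption
  have e1: "f (sup x x') y = sup (f x y) (f x' y)" using A1 by blast
  have e2: "f x' (sup y y') = sup (f x' y) (f x' y')" using A2 by blast
  have s1: "sup x x' = x'" and s2: "sup y y' = y'" using assms(2,3) by (simp_all add: sup.absorb2)
  have "f x y \<le> sup (f x y) (f x' y)" by (rule sup.cobounded1)
  also have "\<dots> = f x' y" using e1 unfolding s1 by (rule sym)
  finally have 1: "f x y \<le> f x' y" .
  have "f x' y \<le> sup (f x' y) (f x' y')" by (rule sup.cobounded1)
  also have "\<dots> = f x' y'" using e2 unfolding s2 by (rule sym)
  finally have 2: "f x' y \<le> f x' y'" .
  from 1 2 show ?thesis by (rule order_trans)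
qed

lemma g_anti:
  assumes "PS_algebra f g" "x \<le> x'" "y \<le> y'"
  shows "g x' y' \<le> g x y"
proof -
  have A1: "\<forall>x x' y. g (sup x x') y = inf (g x y) (g x' y)"
    using assms(1) unfolding PS_algebra_def by (elim conjE) assumption
  have A2: "\<forall>x y y'. g x (sup y y') = inf (g x y) (g x y')"
    using assms(1) unfolding PS_algebra_def by (elim conjE) assumption
  have e1: "g (sup x x') y' = inf (g x y') (g x' y')" using A1 by blast
  have e2: "g x (sup y y') = inf (g x y) (g x y')" using A2 by blast
  have s1: "sup x x' = x'" and s2: "sup y y' = y'" using assms(2,3) by (simp_all add: sup.absorb2)
  have "g x' y' = inf (g x y') (g x' y')" using e1 unfolding s1 .
  also have "\<dots> \<le> g x y'" by (rule inf.cobounded1)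
  finally have 1: "g x' y' \<le> g x y'" .
  have "g x y' = inf (g x y) (g x y')" using e2 unfolding s2 .
  also have "\<dots> \<le> g x y" by (rule inf.cobounded1)
  finally have 2: "g x y' \<le> g x y" .
  from 1 2 show ?thesis by (rule order_trans)
qed

lemma part1:
  fixes f g :: "'a::boolean_algebra \<Rightarrow> 'a \<Rightarrow> 'a"
  assumes ps: "PS_algebra f g"
  shows "wMIA f g \<longleftrightarrow> S_sub_Q g f"
proof
  assume w: "wMIA f g"
  show "S_sub_Q g f" unfolding S_sub_Q_def
  proof (intro ballI impI)
    fix U1 U2 U3 :: "'a set" assume U: "U1 \<in> Ult" "U2 \<in> Ult" "U3 \<in> Ult" and S: "S_rel g U1 U2 U3"
    have u1: "ultrafilter U1" and u2: "ultrafilter U2" and u3: "ultrafilter U3" using U unfolding Ult_def by auto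
    obtain a b where ab: "a \<in> U1" "b \<in> U3" "g a b \<in> U2" using S unfolding S_rel_def by blast
    show "Q_rel f U1 U2 U3" unfolding Q_rel_def
    proof clarify
      fix x y assume xy: "x \<in> U1" "y \<in> U3"
      have x1: "inf x a \<in> U1" using u1 xy ab unfolding ultrafilter_def by blast
      have y1: "inf y b \<in> U3" using u3 xy ab unfolding ultrafilter_def by blast
      have nz: "inf x a \<noteq> bot" "inf y b \<noteq> bot" using x1 y1 u1 u3 unfolding ultrafilter_def by auto
      have "g a b \<le> g (inf x a) (inf y b)" using g_anti[OF ps] by simp
      also have "\<dots> \<le> f (inf x a) (inf y b)" using w nz unfolding wMIA_def by blast
      also have "\<dots> \<le> f x y" using f_mono[OF ps] by simp
      finally show "f x y \<in> U2" using ab(3) u2 unfolding ultrafilter_def by blast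
    qed
  qed
next
  assume sq: "S_sub_Q g f"
  show "wMIA f g" unfolding wMIA_def
  proof (intro allI impI, rule ccontr)
    fix x y assume nz: "x \<noteq> bot \<and> y \<noteq> bot" and ng: "\<not> g x y \<le> f x y"
    have "inf (g x y) (- f x y) \<noteq> bot" using ng inf_shunt[of "g x y" "- f x y"] by simp
    then obtain U2 where u2: "ultrafilter U2" "inf (g x y) (- f x y) \<in> U2" using ultrafilter_exists by blast
    obtain U1 where u1: "ultrafilter U1" "x \<in> U1" using ultrafilter_exists nz by blast
    obtain U3 where u3: "ultrafilter U3" "y \<in> U3" using ultrafilter_exists nz by blast
    have g2: "g x y \<in> U2" and nf2: "- f x y \<in> U2" using u2 unfolding ultrafilter_def by (meson inf_le1 inf_le2)+
    have "S_rel g U1 U2 U3" unfolding S_rel_def using u1 u3 g2 by blast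
    then have "Q_rel f U1 U2 U3" using sq u1 u2 u3 unfolding S_sub_Q_def Ult_def by blast
    then have "f x y \<in> U2" unfolding Q_rel_def using u1 u3 by blast
    then have "inf (f x y) (- f x y) \<in> U2" using nf2 u2 unfolding ultrafilter_def by blast
    then show False using u2 unfolding ultrafilter_def by simp
  qed
qed

theorem lemma40:
  shows "(\<forall>(f::'a::boolean_algebra \<Rightarrow> 'a \<Rightarrow> 'a) g. PS_algebra f g \<longrightarrow> (wMIA f g \<longleftrightarrow> S_sub_Q g f))
     \<and> (\<forall>B::'u \<Rightarrow> 'u \<Rightarrow> 'u \<Rightarrow> bool. betweenness_frame (UNIV::'u set) B \<longrightarrow> S_sub_Q (boxB B) (diamB B))"
proof (intro conjI allI impI)
  fix f g :: "'a \<Rightarrow> 'a \<Rightarrow> 'a" assume "PS_algebra f g"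
  then show "wMIA f g \<longleftrightarrow> S_sub_Q g f" by (rule part1)
next
  fix B :: "'u \<Rightarrow> 'u \<Rightarrow> 'u \<Rightarrow> bool"
  have ps: "PS_algebra (diamB B) (boxB B)"
    unfolding PS_algebra_def diamB_def boxB_def by auto
  have "wMIA (diamB B) (boxB B)" unfolding wMIA_def diamB_def boxB_def by auto
  then show "S_sub_Q (boxB B) (diamB B)" using part1[OF ps] by blast
qed

end
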